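(* Let $p\ge 1$ and $v\ge 1$ be integers. Let $W_1,\dots,W_p$ be real random variables that are almost surely pairwise distinct, and let $\chi_1,\dots,\chi_p$ be random variables with values in $\{-1,0,1\}$. Let $\mathcal H_0\subseteq\{1,\dots,p\}$ (the true nulls) be such that, conditional on $(W_1,\dots,W_p)$ and on $(\chi_j)_{j\notin\mathcal H_0}$, the variables $(\chi_j)_{j\in\mathcal H_0}$ are jointly independent and each uniformly distributed on $\{-1,+1\}$. Let $V$ be the number of false discoveries of the knockoffs procedure with parameter $v$ (defined in the context). Then $V$ is stochastically dominated by $\mathrm{NB}(v,1/2)$, i.e. $\Pr(V\ge x)\le \Pr(\mathrm{NB}(v,1/2)\ge x)$ for every real $x$.
   Context: Knockoffs procedure with parameter $v$: let $\rho$ be the (a.s. unique) permutation of $\{1,\dots,p\}$ with $W_{\rho(1)}> W_{\rho(2)}>\cdots> W_{\rho(p)}$. Let $j^\star$ be the position of the $v$-th occurrence of $-1$ in the sequence $\chi_{\rho(1)},\dots,\chi_{\rho(p)}$, and $j^\star=p$ if fewer than $v$ entries equal $-1$. The procedure rejects hypothesis $\rho(j)$ for every $j\le j^\star$ with $\chi_{\rho(j)}=+1$. The false discovery number is $V=\#\{j\in\mathcal H_0: j \text{ is rejected}\}$. $\mathrm{NB}(m,q)$ denotes a negative binomial random variable counting the number of successes before the $m$-th failure in a sequence of independent Bernoulli trials with success probability $q$. Motivating setting (where the conditional-independence hypothesis is known to hold): in the linear model $y=X\beta+z$ with $X\in\mathbb R^{n\times p}$ of full column rank $p\le n$, unit-norm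 columns, and $z\sim\mathcal N(0,\sigma^2 I_n)$, one builds $\tilde X\in\mathbb R^{n\times p}$ with $\tilde X^\top\tilde X=X^\top X$ and $X^\top\tilde X=X^\top X-\mathrm{Diag}(s)$ for some $s\ge 0$; $Z_j$ (resp. $\tilde Z_j$) is the largest $\lambda$ at which the $j$-th original (resp. knockoff) coefficient is nonzero on the Lasso path of $y$ on $[X,\tilde X]$; $W_j=\max\{Z_j,\tilde Z_j\}$, $\chi_j=\mathrm{sgn}(Z_j-\tilde Z_j)$, and $\mathcal H_0=\{j:\beta_j=0\}$. *)

theory Defs
  imports "HOL-Probability.Probability"
begin

text \<open>The ordering rho: the indices 1..p listed by decreasing W
  (rho(j) = knockoff_order p W ! (j - 1)).\<close>
definition knockoff_order :: "nat \<Rightarrow> (nat \<Rightarrow> real) \<Rightarrow> nat list" where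
  "knockoff_order p W = sort_key (\<lambda>i. - W i) [1..<Suc p]"

definition knockoff_jstar :: "nat \<Rightarrow> nat \<Rightarrow> (nat \<Rightarrow> real) \<Rightarrow> (nat \<Rightarrow> int) \<Rightarrow> nat" where
  "knockoff_jstar p v W chi =
     (let rho = knockoff_order p W;
          negpos = filter (\<lambda>j. chi (rho ! (j - 1)) = -1) [1..<Suc p]
      in if length negpos < v then p else negpos ! (v - 1))"

definition knockoff_rejected :: "nat \<Rightarrow> nat \<Rightarrow> (nat \<Rightarrow> real) \<Rightarrow> (nat \<Rightarrow> int) \<Rightarrow> nat set" where
  "knockoff_rejected p v W chi =
     {knockoff_order p W ! (j - 1) | j. 1 \<le> j \<and> j \<le> knockoff_jstar p v W chi
        \<and> chi (knockoff_order p W ! (j - 1)) = 1}"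

definition knockoff_V :: "nat \<Rightarrow> nat \<Rightarrow> nat set \<Rightarrow> (nat \<Rightarrow> real) \<Rightarrow> (nat \<Rightarrow> int) \<Rightarrow> nat" where
  "knockoff_V p v H0 W chi = card {j \<in> H0. j \<in> knockoff_rejected p v W chi}"

end

theory Submission
  imports Defs
begin


definition G :: "nat \<Rightarrow> nat \<Rightarrow> real" where
  "G v k = measure_pmf.prob (neg_binomial_pmf v (1/2)) {j. k \<le> j}"

lemma G_nonneg: "0 \<le> G v k" by (simp add: G_def)

lemma G_k0: "G v 0 = 1"
  by (simp add: G_def measure_pmf.prob_space)

lemma G_0: "G 0 k = (if k = 0 then 1 else 0)"
  by (auto simp: G_def measure_return indicator_def)

lemma G_rec: "G (Suc v) (Suc k) = (G v (Suc k) + G (Suc v) k) / 2"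
proof -
  let ?X = "{j. Suc k \<le> j}"
  have u: "neg_binomial_pmf (Suc v) (1/2) =
           do {b \<leftarrow> bernoulli_pmf (1/2);
               if b then neg_binomial_pmf v (1/2) else map_pmf Suc (neg_binomial_pmf (Suc v) (1/2))}"
    by (rule neg_binomial_pmf_unfold) auto
  have pre: "Suc -` ?X = {j. k \<le> j}" by auto
  have "emeasure (measure_pmf (neg_binomial_pmf (Suc v) (1/2))) ?X
     = emeasure (measure_pmf (neg_binomial_pmf v (1/2))) ?X * inverse 2
       + emeasure (measure_pmf (neg_binomial_pmf (Suc v) (1/2))) {j. k \<le> j} * inverse 2"
    apply (subst u)
    apply (subst emeasure_bind_pmf)
    apply (subst nn_integral_bernoulli_pmf)
    apply (auto simp: pre divide_ennreal_def)
    done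
  then have "ennreal (G (Suc v) (Suc k)) = ennreal (G v (Suc k)) * inverse 2 + ennreal (G (Suc v) k) * inverse 2"
    by (simp add: G_def measure_pmf.emeasure_eq_measure)
  also have "\<dots> = ennreal ((G v (Suc k) + G (Suc v) k) / 2)"
    using G_nonneg[of v "Suc k"] G_nonneg[of "Suc v" k]
    by (metis add_divide_distrib_ennreal add_increasing2 divide_ennreal_def
    ennreal_divide_numeral ennreal_plus)
  finally show ?thesis using G_nonneg[of v "Suc k"] G_nonneg[of "Suc v" k] G_nonneg[of "Suc v" "Suc k"]
    by (simp add: ennreal_inj)
qed

lemma G_mono: "G v k \<le> G (Suc v) k"
proof (induction k arbitrary: v)
  case 0 then show ?case by (simp add: G_k0)
next
  case (Suc k)
  note outer = Suc.IH
  show ?case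
  proof (induction v)
    case 0 then show ?case by (simp add: G_0 G_nonneg)
  next
    case (Suc v)
    have r1: "G (Suc v) (Suc k) = (G v (Suc k) + G (Suc v) k) / 2" by (rule G_rec)
    have r2: "G (Suc (Suc v)) (Suc k) = (G (Suc v) (Suc k) + G (Suc (Suc v)) k) / 2" by (rule G_rec)
    have i1: "G v (Suc k) \<le> G (Suc v) (Suc k)" by (rule Suc.IH)
    have i2: "G (Suc v) k \<le> G (Suc (Suc v)) k" by (rule outer)
    show ?case using r1 r2 i1 i2 by (simp add: field_simps)
  qed
qed



fun cnt :: "nat \<Rightarrow> nat list \<Rightarrow> (nat \<Rightarrow> int) \<Rightarrow> nat set \<Rightarrow> nat" where
  "cnt 0 L \<sigma> H = 0"
| "cnt (Suc v) [] \<sigma> H = 0"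
| "cnt (Suc v) (i#L) \<sigma> H = (if \<sigma> i = -1 then cnt v L \<sigma> H
      else if \<sigma> i = 1 \<and> i \<in> H then Suc (cnt (Suc v) L \<sigma> H) else cnt (Suc v) L \<sigma> H)"

lemma cnt_Nil[simp]: "cnt v [] \<sigma> H = 0" by (cases v) auto

lemma cnt_cong: "(\<forall>i\<in>set L. \<sigma> i = \<sigma>' i) \<Longrightarrow> cnt v L \<sigma> H = cnt v L \<sigma>' H"
  by (induction v L \<sigma> H rule: cnt.induct) auto



definition mrg :: "(nat \<Rightarrow> int) \<Rightarrow> nat set \<Rightarrow> (nat \<Rightarrow> int) \<Rightarrow> nat \<Rightarrow> int" where
  "mrg c N s = (\<lambda>j. if j \<in> N then s j else c j)"

lemma card_PiE_pm: "finite N \<Longrightarrow> card (PiE N (\<lambda>_. {-1, 1::int})) = 2 ^ card N"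
  by (simp add: card_PiE numeral_2_eq_2)

lemma count_triv: "finite N \<Longrightarrow> real (card {s \<in> PiE N (\<lambda>_. {-1,1::int}). P s}) \<le> 2 ^ card N"
proof -
  assume f: "finite N"
  have "card {s \<in> PiE N (\<lambda>_. {-1,1::int}). P s} \<le> card (PiE N (\<lambda>_. {-1,1::int}))"
    by (rule card_mono) (use f in \<open>auto simp: finite_PiE\<close>)
  then have "card {s \<in> PiE N (\<lambda>_. {-1,1::int}). P s} \<le> 2 ^ card N" using card_PiE_pm[OF f] by simp
  then show ?thesis by (metis of_nat_le_iff of_nat_numeral of_nat_power)
qed


lemma upd_in_PiE: "s \<in> PiE (N - {i}) T \<Longrightarrow> i \<in> N \<Longrightarrow> a \<in> T i \<Longrightarrow> s(i:=a) \<in> PiE N T"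
  using PiE_fun_upd[of a T i s "N - {i}"] by (simp add: insert_absorb)

lemma card_split:
  assumes "finite N" "i \<in> N"
  shows "card {s \<in> PiE N (\<lambda>_. {-1,1::int}). P s}
       = card {s \<in> PiE (N-{i}) (\<lambda>_. {-1,1::int}). P (s(i:=-1))}
       + card {s \<in> PiE (N-{i}) (\<lambda>_. {-1,1::int}). P (s(i:=1))}"
proof -
  let ?T = "\<lambda>_. {-1,1::int}"
  let ?N = "N - {i}"
  let ?A = "{s \<in> PiE ?N ?T. P (s(i:=-1))}"
  let ?B = "{s \<in> PiE ?N ?T. P (s(i:=1))}"
  have inj: "inj_on (\<lambda>s. s(i:=a)) (PiE ?N T)" for a :: int and T
  proof (rule inj_onI)
    fix s t assume s: "s \<in> PiE ?N T" and t: "t \<in> PiE ?N T" and e: "s(i:=a) = t(i:=a)"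
    show "s = t"
    proof
      fix j show "s j = t j"
      proof (cases "j = i")
        case True
        then have "s j = undefined" "t j = undefined" using s t PiE_arb[of s ?N T j] PiE_arb[of t ?N T j] by auto
        then show ?thesis by simp
      next
        case False then show ?thesis using e by (metis fun_upd_other)
      qed
    qed
  qed
  have eq: "{s \<in> PiE N ?T. P s} = (\<lambda>s. s(i:=-1)) ` ?A \<union> (\<lambda>s. s(i:=1)) ` ?B"
  proof (intro equalityI subsetI)
    fix s assume s: "s \<in> {s \<in> PiE N ?T. P s}"
    then have sN: "s \<in> PiE N ?T" and Ps: "P s" by auto
    have r: "(restrict s ?N)(i := s i) = s"
    proof
      fix j show "((restrict s ?N)(i := s i)) j = s j"
      proof (cases "j = i")
        case False
        show ?thesis
        proof (cases "j \<in> N")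
          case True with False show ?thesis by simp
        next
          case nj: False
          then have "s j = undefined" using sN PiE_arb[of s N ?T j] by blast
          with False nj show ?thesis by simp
        qed
      qed simp
    qed
    have rN: "restrict s ?N \<in> PiE ?N ?T" using sN by (simp add: PiE_iff)
    have "s i \<in> {-1,1}" using PiE_mem[OF sN assms(2)] by simp
    then show "s \<in> (\<lambda>s. s(i:=-1)) ` ?A \<union> (\<lambda>s. s(i:=1)) ` ?B"
    proof
      assume si: "s i = -1"
      have "restrict s ?N \<in> ?A" using r rN Ps si by simp
      moreover have "s = (\<lambda>s. s(i:=-1)) (restrict s ?N)" using r si by simp
      ultimately show ?thesis by blast
    next
      assume "s i \<in> {1}"
      then have si: "s i = 1" by simp
      have "restrict s ?N \<in> ?B" using r rN Ps si by simp
      moreover have "s = (\<lambda>s. s(i:=1)) (restrict s ?N)" using r si by simp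
      ultimately show ?thesis by blast
    qed
  next
    fix s assume "s \<in> (\<lambda>s. s(i:=-1)) ` ?A \<union> (\<lambda>s. s(i:=1)) ` ?B"
    then show "s \<in> {s \<in> PiE N ?T. P s}"
    proof
      assume "s \<in> (\<lambda>s. s(i:=-1)) ` ?A"
      then obtain t where t: "t \<in> ?A" "s = t(i:=-1)" by blast
      then show ?thesis using upd_in_PiE[of t N i ?T "-1"] assms by simp
    next
      assume "s \<in> (\<lambda>s. s(i:=1)) ` ?B"
      then obtain t where t: "t \<in> ?B" "s = t(i:=1)" by blast
      then show ?thesis using upd_in_PiE[of t N i ?T "1"] assms by simp
    qed
  qed
  have fin: "finite (PiE ?N ?T)" using assms by (simp add: finite_PiE)
  have disj: "(\<lambda>s. s(i:=-1)) ` ?A \<inter> (\<lambda>s. s(i:=1)) ` ?B = {}"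
  proof -
    have False if a: "u \<in> (\<lambda>s. s(i:=-1)) ` ?A" and b: "u \<in> (\<lambda>s. s(i:=1)) ` ?B" for u
    proof -
      from a obtain s where s: "u = s(i:=-1)" by (rule imageE)
      from b obtain t where t: "u = t(i:=1)" by (rule imageE)
      have "u i = -1" using s by simp
      moreover have "u i = 1" using t by simp
      ultimately show False by simp
    qed
    then show ?thesis by blast
  qed
  have "card ((\<lambda>s. s(i:=-1)) ` ?A \<union> (\<lambda>s. s(i:=1)) ` ?B) = card ((\<lambda>s. s(i:=-1)) ` ?A) + card ((\<lambda>s. s(i:=1)) ` ?B)"
    by (rule card_Un_disjoint) (use fin disj in \<open>auto intro: finite_subset\<close>)
  also have "card ((\<lambda>s. s(i:=-1)) ` ?A) = card ?A"
    by (rule card_image, rule inj_on_subset[OF inj[of "-1" ?T]]) (rule Collect_restrict)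
  also have "card ((\<lambda>s. s(i:=1)) ` ?B) = card ?B"
    by (rule card_image, rule inj_on_subset[OF inj[of "1" ?T]]) (rule Collect_restrict)
  finally show ?thesis unfolding eq .
qed
lemma count_bound:
  "distinct L \<Longrightarrow> N = H \<inter> set L \<Longrightarrow>
   real (card {s \<in> PiE N (\<lambda>_. {-1,1::int}). k \<le> cnt v L (mrg c N s) H}) \<le> 2 ^ card N * G v k"
proof (induction L arbitrary: N v k)
  case Nil
  show ?case
  proof (cases k)
    case 0 then show ?thesis using count_triv[of N "\<lambda>_. True"] Nil by (simp add: G_k0)
  next
    case (Suc k') then show ?thesis by (simp add: G_nonneg)
  qed
next
  case (Cons i L)
  have finN: "finite N" using Cons.prems by auto
  show ?case
  proof (cases k)
    case 0 then show ?thesis using count_triv[OF finN, of "\<lambda>_. True"] by (simp add: G_k0)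
  next
    case (Suc k')
    show ?thesis
    proof (cases v)
      case 0 then show ?thesis using Suc by (simp add: G_nonneg)
    next
      case (Suc v')
      show ?thesis
      proof (cases "i \<in> N")
        case False
        then have iH: "i \<notin> H" using Cons.prems by auto
        have N': "N = H \<inter> set L" using Cons.prems False by auto
        have dL: "distinct L" using Cons.prems by auto
        have mi: "mrg c N s i = c i" for s using False by (simp add: mrg_def)
        show ?thesis
        proof (cases "c i = -1")
          case True
          have "{s \<in> PiE N (\<lambda>_. {-1,1::int}). k \<le> cnt v (i#L) (mrg c N s) H}
              = {s \<in> PiE N (\<lambda>_. {-1,1::int}). k \<le> cnt v' L (mrg c N s) H}"
            using True Suc mi by simp
          moreover have "real (card {s \<in> PiE N (\<lambda>_. {-1,1::int}). k \<le> cnt v' L (mrg c N s) H}) \<le> 2 ^ card N * G v' k"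
            by (rule Cons.IH[OF dL N'])
          moreover have "G v' k \<le> G v k" using G_mono Suc by simp
          ultimately show ?thesis
            by (metis (no_types, lifting) dual_order.trans mult_left_mono zero_le_numeral zero_le_power)
        next
          case ne: False
          have "{s \<in> PiE N (\<lambda>_. {-1,1::int}). k \<le> cnt v (i#L) (mrg c N s) H}
              = {s \<in> PiE N (\<lambda>_. {-1,1::int}). k \<le> cnt v L (mrg c N s) H}"
            using ne Suc mi iH by simp
          then show ?thesis using Cons.IH[OF dL N'] by simp
        qed
      next
        case True
        let ?N = "N - {i}"
        have iL: "i \<notin> set L" using Cons.prems by auto
        have N': "?N = H \<inter> set L" using Cons.prems iL by auto
        have dL: "distinct L" using Cons.prems by auto
        have iH: "i \<in> H" using True Cons.prems by auto
        have mcong: "cnt w L (mrg c N (s(i:=a))) H = cnt w L (mrg c ?N s) H" for w s a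
          by (rule cnt_cong) (use iL in \<open>auto simp: mrg_def\<close>)
        have mi: "mrg c N (s(i:=a)) i = a" for s a using True by (simp add: mrg_def)
        have c1: "{s \<in> PiE ?N (\<lambda>_. {-1,1::int}). k \<le> cnt v (i#L) (mrg c N (s(i:=-1))) H}
                 = {s \<in> PiE ?N (\<lambda>_. {-1,1::int}). k \<le> cnt v' L (mrg c ?N s) H}"
          using Suc mi mcong by simp
        have c2: "{s \<in> PiE ?N (\<lambda>_. {-1,1::int}). k \<le> cnt v (i#L) (mrg c N (s(i:=1))) H}
                 = {s \<in> PiE ?N (\<lambda>_. {-1,1::int}). k' \<le> cnt v L (mrg c ?N s) H}"
          using Suc \<open>k = Suc k'\<close> mi mcong iH by simp
        have b1: "real (card {s \<in> PiE ?N (\<lambda>_. {-1,1::int}). k \<le> cnt v' L (mrg c ?N s) H}) \<le> 2 ^ card ?N * G v' k"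
          by (rule Cons.IH[OF dL N'])
        have b2: "real (card {s \<in> PiE ?N (\<lambda>_. {-1,1::int}). k' \<le> cnt v L (mrg c ?N s) H}) \<le> 2 ^ card ?N * G v k'"
          by (rule Cons.IH[OF dL N'])
        have cN: "card N = Suc (card ?N)" using True finN by (metis card_Suc_Diff1)
        have rec: "G v k = (G v' k + G v k') / 2" using Suc \<open>k = Suc k'\<close> G_rec by simp
        have "real (card {s \<in> PiE N (\<lambda>_. {-1,1::int}). k \<le> cnt v (i#L) (mrg c N s) H})
             = real (card {s \<in> PiE ?N (\<lambda>_. {-1,1::int}). k \<le> cnt v' L (mrg c ?N s) H})
               + real (card {s \<in> PiE ?N (\<lambda>_. {-1,1::int}). k' \<le> cnt v L (mrg c ?N s) H})"
          using card_split[OF finN True, of "\<lambda>s. k \<le> cnt v (i#L) (mrg c N s) H"] c1 c2 by simp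
        also have "\<dots> \<le> 2 ^ card ?N * G v' k + 2 ^ card ?N * G v k'" using b1 b2 by simp
        also have "\<dots> = 2 ^ card ?N * (G v' k + G v k')" by (simp add: algebra_simps)
        also have "\<dots> = 2 ^ card N * G v k" unfolding cN rec by simp
        finally show ?thesis .
      qed
    qed
  qed
qed



definition jst :: "nat \<Rightarrow> nat list \<Rightarrow> (nat \<Rightarrow> int) \<Rightarrow> nat" where
  "jst v L \<sigma> = (let negpos = filter (\<lambda>j. \<sigma> (L ! (j - 1)) = -1) [1..<Suc (length L)]
     in if length negpos < v then length L else negpos ! (v - 1))"

lemma negpos_Cons:
  "filter (\<lambda>j. \<sigma> ((i#L) ! (j - 1)) = -1) [1..<Suc (Suc (length L))]
   = (if \<sigma> i = -1 then [1] else []) @ map Suc (filter (\<lambda>j. \<sigma> (L ! (j - 1)) = -1) [1..<Suc (length L)])"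
proof -
  have u: "[1..<Suc (Suc n)] = 1 # map Suc [1..<Suc n]" for n
    by (simp add: upt_conv_Cons map_Suc_upt del: upt_Suc)
  have f: "filter ((\<lambda>j. \<sigma> ((i#L) ! (j - 1)) = -1) \<circ> Suc) [1..<Suc (length L)]
         = filter (\<lambda>j. \<sigma> (L ! (j - 1)) = -1) [1..<Suc (length L)]"
    by (rule filter_cong) (auto simp: nth_Cons' simp del: upt_Suc)
  show ?thesis unfolding u filter.simps(2) filter_map f by simp
qed

lemma jst_Cons: "jst (Suc v) (i#L) \<sigma> =
   (if \<sigma> i = -1 then (if v = 0 then 1 else Suc (jst v L \<sigma>)) else Suc (jst (Suc v) L \<sigma>))"
proof -
  have e: "length (i#L) = Suc (length L)" by simp
  show ?thesis
    unfolding jst_def Let_def e negpos_Cons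
    by (cases v) (auto simp: nth_Cons')
qed

lemma jst_le: "v \<ge> 1 \<Longrightarrow> jst v L \<sigma> \<le> length L"
proof -
  let ?np = "filter (\<lambda>j. \<sigma> (L ! (j - 1)) = -1) [1..<Suc (length L)]"
  have "?np ! (v - 1) \<le> length L" if "\<not> length ?np < v" "v \<ge> 1"
  proof -
    have "?np ! (v - 1) \<in> set ?np" using that by (intro nth_mem) auto
    then show ?thesis by (auto simp del: upt_Suc)
  qed
  moreover assume "v \<ge> 1"
  ultimately show ?thesis unfolding jst_def Let_def
    by (auto simp del: upt_Suc)
qed

lemma jst_cnt: "v \<ge> 1 \<Longrightarrow> cnt v L \<sigma> H = length (filter (\<lambda>i. i \<in> H \<and> \<sigma> i = 1) (take (jst v L \<sigma>) L))"
proof (induction L arbitrary: v)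
  case Nil
  then show ?case by simp
next
  case (Cons i L)
  then obtain v' where v: "v = Suc v'" by (cases v) auto
  show ?case
  proof (cases "\<sigma> i = -1")
    case True
    show ?thesis
    proof (cases "v' = 0")
      case True
      with \<open>\<sigma> i = -1\<close> show ?thesis by (simp add: v jst_Cons)
    next
      case False
      then have "v' \<ge> 1" by simp
      with Cons.IH[of v'] \<open>\<sigma> i = -1\<close> show ?thesis by (simp add: v jst_Cons)
    qed
  next
    case False
    with Cons.IH[of v] Cons.prems show ?thesis by (simp add: v jst_Cons)
  qed
qed


lemma insort_key_cong: "(\<forall>y\<in>set ys. f x \<le> f y \<longleftrightarrow> g x \<le> g y) \<Longrightarrow> insort_key f x ys = insort_key g x ys"
  by (induction ys) auto

lemma sort_key_cong_order:
  fixes f g :: "'a \<Rightarrow> 'b::linorder"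
  shows "(\<forall>x\<in>set xs. \<forall>y\<in>set xs. f x \<le> f y \<longleftrightarrow> g x \<le> g y) \<Longrightarrow> sort_key f xs = sort_key g xs"
proof (induction xs)
  case Nil then show ?case by simp
next
  case (Cons x xs)
  then have "sort_key f xs = sort_key g xs" by simp
  moreover have "insort_key f x (sort_key g xs) = insort_key g x (sort_key g xs)"
    by (rule insort_key_cong) (use Cons.prems in simp)
  ultimately show ?case by simp
qed

lemma ord_length: "length (knockoff_order p w) = p" by (simp add: knockoff_order_def)
lemma ord_distinct: "distinct (knockoff_order p w)" by (simp add: knockoff_order_def)
lemma ord_set: "set (knockoff_order p w) = {1..p}" by (auto simp: knockoff_order_def)

lemma ord_cong: "(\<forall>i\<in>{1..p}. \<forall>j\<in>{1..p}. w i \<le> w j \<longleftrightarrow> w' i \<le> w' j) \<Longrightarrow> knockoff_order p w = knockoff_order p w'"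
  unfolding knockoff_order_def by (rule sort_key_cong_order) auto

lemma knockoff_V_eq:
  assumes "v \<ge> 1"
  shows "knockoff_V p v H0 w \<sigma> = cnt v (knockoff_order p w) \<sigma> H0"
proof -
  define L where "L = knockoff_order p w"
  have lenL: "length L = p" unfolding L_def by (rule ord_length)
  have dL: "distinct L" unfolding L_def by (rule ord_distinct)
  have js: "knockoff_jstar p v w \<sigma> = jst v L \<sigma>"
    unfolding knockoff_jstar_def jst_def L_def Let_def using lenL L_def by simp
  define J where "J = jst v L \<sigma>"
  have JL: "J \<le> length L" unfolding J_def using jst_le assms by blast
  have rej: "knockoff_rejected p v w \<sigma> = set (filter (\<lambda>i. \<sigma> i = 1) (take J L))"
    unfolding knockoff_rejected_def js J_def[symmetric] L_def[symmetric]
  proof (intro equalityI subsetI)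
    fix x assume "x \<in> {L ! (j - 1) |j. 1 \<le> j \<and> j \<le> J \<and> \<sigma> (L ! (j - 1)) = 1}"
    then obtain j where j: "x = L ! (j - 1)" "1 \<le> j" "j \<le> J" "\<sigma> (L ! (j - 1)) = 1" by blast
    have "take J L ! (j - 1) = x" using j JL by simp
    moreover have "j - 1 < length (take J L)" using j JL by simp
    ultimately have "x \<in> set (take J L)" by (metis nth_mem)
    then show "x \<in> set (filter (\<lambda>i. \<sigma> i = 1) (take J L))" using j by simp
  next
    fix x assume "x \<in> set (filter (\<lambda>i. \<sigma> i = 1) (take J L))"
    then have x: "x \<in> set (take J L)" "\<sigma> x = 1" by auto
    then obtain idx where idx: "idx < length (take J L)" "take J L ! idx = x" by (metis in_set_conv_nth)
    then have "x = L ! (Suc idx - 1)" "1 \<le> Suc idx" "Suc idx \<le> J" using JL by auto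
    then show "x \<in> {L ! (j - 1) |j. 1 \<le> j \<and> j \<le> J \<and> \<sigma> (L ! (j - 1)) = 1}" using x by blast
  qed
  have "{j \<in> H0. j \<in> knockoff_rejected p v w \<sigma>} = set (filter (\<lambda>i. i \<in> H0 \<and> \<sigma> i = 1) (take J L))"
    unfolding rej by auto
  moreover have "distinct (filter (\<lambda>i. i \<in> H0 \<and> \<sigma> i = 1) (take J L))" using dL by simp
  ultimately have "knockoff_V p v H0 w \<sigma> = length (filter (\<lambda>i. i \<in> H0 \<and> \<sigma> i = 1) (take J L))"
    unfolding knockoff_V_def by (metis distinct_card)
  also have "\<dots> = cnt v L \<sigma> H0" unfolding J_def using jst_cnt[OF assms] by simp
  finally show ?thesis unfolding L_def .
qed



lemma meas_pair_cs:
  fixes a :: "'x \<Rightarrow> 'b::countable" and b :: "'x \<Rightarrow> 'c::countable"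
  assumes a: "a \<in> measurable M (count_space UNIV)" and b: "b \<in> measurable M (count_space UNIV)"
  shows "(\<lambda>x. F (a x) (b x)) \<in> measurable M (count_space UNIV)"
proof (rule measurable_compose_countable[where f = "\<lambda>i x. F i (b x)" and g = a, OF _ a])
  fix i show "(\<lambda>x. F i (b x)) \<in> measurable M (count_space UNIV)"
    by (rule measurable_compose[OF b]) simp
qed

lemma meas_map_list:
  fixes f :: "'i \<Rightarrow> 'x \<Rightarrow> 'b::countable"
  shows "(\<And>j. j \<in> set xs \<Longrightarrow> (\<lambda>x. f j x) \<in> measurable M (count_space UNIV)) \<Longrightarrow>
     (\<lambda>x. map (\<lambda>j. f j x) xs) \<in> measurable M (count_space UNIV)"
proof (induction xs)
  case Nil then show ?case by simp
next
  case (Cons y xs)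
  have "(\<lambda>x. f y x # map (\<lambda>j. f j x) xs) \<in> measurable M (count_space UNIV)"
    by (rule meas_pair_cs[where F = Cons]) (use Cons in auto)
  then show ?case by simp
qed


theorem lemma2:
  fixes M :: "'a measure" and p v :: nat and H0 :: "nat set"
    and W :: "nat \<Rightarrow> 'a \<Rightarrow> real" and chi :: "nat \<Rightarrow> 'a \<Rightarrow> int"
  assumes "prob_space M"
    and "p \<ge> 1" and "v \<ge> 1"
    and W_meas: "\<And>j. j \<in> {1..p} \<Longrightarrow> W j \<in> borel_measurable M"
    and chi_meas: "\<And>j. j \<in> {1..p} \<Longrightarrow> chi j \<in> measurable M (count_space UNIV)"
    and chi_vals: "\<And>j \<omega>. j \<in> {1..p} \<Longrightarrow> \<omega> \<in> space M \<Longrightarrow> chi j \<omega> \<in> {-1, 0, 1}"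
    and W_distinct: "AE \<omega> in M. \<forall>i\<in>{1..p}. \<forall>j\<in>{1..p}. i \<noteq> j \<longrightarrow> W i \<omega> \<noteq> W j \<omega>"
    and H0_sub: "H0 \<subseteq> {1..p}"
    and cond_null:
      "\<And>B s. B \<in> sets (PiM {1..p} (\<lambda>_. borel) \<Otimes>\<^sub>M PiM ({1..p} - H0) (\<lambda>_. count_space UNIV))
         \<Longrightarrow> s \<in> H0 \<rightarrow> {-1, 1} \<Longrightarrow>
         measure M {\<omega> \<in> space M. (\<forall>j\<in>H0. chi j \<omega> = s j) \<and>
              ((\<lambda>j\<in>{1..p}. W j \<omega>), (\<lambda>j\<in>{1..p} - H0. chi j \<omega>)) \<in> B}
         = measure M {\<omega> \<in> space M.
              ((\<lambda>j\<in>{1..p}. W j \<omega>), (\<lambda>j\<in>{1..p} - H0. chi j \<omega>)) \<in> B} / 2 ^ card H0"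
  shows "\<forall>x::real.
           measure M {\<omega> \<in> space M. real (knockoff_V p v H0 (\<lambda>j. W j \<omega>) (\<lambda>j. chi j \<omega>)) \<ge> x}
           \<le> measure_pmf.prob (neg_binomial_pmf v (1/2)) {k. real k \<ge> x}"
proof
  fix x :: real
  interpret P: prob_space M by fact
  define S where "S = {1..p}"
  define N where "N = S - H0"
  define MM where "MM = (PiM S (\<lambda>_. borel :: real measure) \<Otimes>\<^sub>M PiM N (\<lambda>_. count_space (UNIV :: int set)))"
  define Y where "Y = (\<lambda>\<omega>. ((\<lambda>j\<in>S. W j \<omega>), (\<lambda>j\<in>N. chi j \<omega>)))"
  define PS where "PS = PiE H0 (\<lambda>_. {-1, 1::int})"
  define m where "m = card H0"
  define k0 where "k0 = nat \<lceil>x\<rceil>"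
  define PR where "PR = List.product [1..<Suc p] [1..<Suc p]"
  define Phi where "Phi = (\<lambda>s y. cnt v (knockoff_order p (fst y)) (mrg (snd y) H0 s) H0)"
  define B where "B = (\<lambda>s. {y \<in> space MM. k0 \<le> Phi s y})"
  have finH0: "finite H0" using H0_sub finite_subset by blast
  have finPS: "finite PS" unfolding PS_def using finH0 by (simp add: finite_PiE)
  have cardPS: "card PS = 2 ^ m" unfolding PS_def m_def by (rule card_PiE_pm[OF finH0])
  have kx: "x \<le> real j \<longleftrightarrow> k0 \<le> j" for j :: nat
    unfolding k0_def by (simp add: nat_le_iff ceiling_le_iff)
  have Ymeas: "Y \<in> measurable M MM"
    unfolding Y_def MM_def
  proof (rule measurable_Pair)
    show "(\<lambda>\<omega>. \<lambda>j\<in>S. W j \<omega>) \<in> measurable M (PiM S (\<lambda>_. borel))"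
      by (rule measurable_restrict) (use W_meas S_def in auto)
    show "(\<lambda>\<omega>. \<lambda>j\<in>N. chi j \<omega>) \<in> measurable M (PiM N (\<lambda>_. count_space UNIV))"
      by (rule measurable_restrict) (use chi_meas N_def S_def in auto)
  qed
  have cmp: "(\<lambda>y. fst y i \<le> fst y j) \<in> measurable MM (count_space UNIV)" if "i \<in> S" "j \<in> S" for i j
  proof -
    have [measurable]: "(\<lambda>y. fst y i) \<in> borel_measurable MM"
      unfolding MM_def by (rule measurable_compose[OF measurable_fst measurable_component_singleton]) (use that in auto)
    have [measurable]: "(\<lambda>y. fst y j) \<in> borel_measurable MM"
      unfolding MM_def by (rule measurable_compose[OF measurable_fst measurable_component_singleton]) (use that in auto)
    show ?thesis by measurable
  qed
  have cmpc: "(\<lambda>y. if j \<in> N then snd y j else (0::int)) \<in> measurable MM (count_space UNIV)" for j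
  proof (cases "j \<in> N")
    case True
    have "(\<lambda>y. snd y j) \<in> measurable MM (count_space UNIV)"
      unfolding MM_def by (rule measurable_compose[OF measurable_snd measurable_component_singleton]) (use True in auto)
    then show ?thesis using True by simp
  next
    case False then show ?thesis by simp
  qed
  define g where "g = (\<lambda>y::(nat \<Rightarrow> real) \<times> (nat \<Rightarrow> int).
      (map (\<lambda>q. fst y (fst q) \<le> fst y (snd q)) PR, map (\<lambda>j. if j \<in> N then snd y j else 0) [1..<Suc p]))"
  have gmeas: "g \<in> measurable MM (count_space UNIV)"
    unfolding g_def
  proof (rule meas_pair_cs[where F = Pair])
    show "(\<lambda>y. map (\<lambda>q. fst y (fst q) \<le> fst y (snd q)) PR) \<in> measurable MM (count_space UNIV)"
    proof (rule meas_map_list)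
      fix q assume "q \<in> set PR"
      then have "fst q \<in> S" "snd q \<in> S" unfolding PR_def S_def by auto
      then show "(\<lambda>y. fst y (fst q) \<le> fst y (snd q)) \<in> measurable MM (count_space UNIV)" by (rule cmp)
    qed
    show "(\<lambda>y. map (\<lambda>j. if j \<in> N then snd y j else 0) [1..<Suc p]) \<in> measurable MM (count_space UNIV)"
      by (rule meas_map_list) (rule cmpc)
  qed
  define Ford where "Ford = (\<lambda>bl. knockoff_order p (SOME w::nat \<Rightarrow> real. map (\<lambda>q. w (fst q) \<le> w (snd q)) PR = bl))"
  define F where "F = (\<lambda>s z. cnt v (Ford (fst z)) (mrg (\<lambda>j. snd z ! (j - 1)) H0 s) H0)"
  have PhiF: "Phi s y = F s (g y)" for s y
  proof -
    let ?w = "fst y"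
    let ?bl = "map (\<lambda>q. ?w (fst q) \<le> ?w (snd q)) PR"
    define w0 where "w0 = (SOME w::nat \<Rightarrow> real. map (\<lambda>q. w (fst q) \<le> w (snd q)) PR = ?bl)"
    have "map (\<lambda>q. w0 (fst q) \<le> w0 (snd q)) PR = ?bl"
    proof -
      have ex: "\<exists>w::nat \<Rightarrow> real. map (\<lambda>q. w (fst q) \<le> w (snd q)) PR = ?bl" by blast
      show ?thesis unfolding w0_def by (rule someI_ex[OF ex])
    qed
    then have pat: "\<forall>q\<in>set PR. (w0 (fst q) \<le> w0 (snd q)) = (?w (fst q) \<le> ?w (snd q))"
      by (simp add: map_eq_conv)
    have o: "knockoff_order p w0 = knockoff_order p ?w"
    proof (rule ord_cong, intro ballI)
      fix i j assume "i \<in> {1..p}" "j \<in> {1..p}"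
      then have "(i, j) \<in> set PR" unfolding PR_def by auto
      then show "(w0 i \<le> w0 j) = (?w i \<le> ?w j)" using pat by fastforce
    qed
    have Fo: "Ford (fst (g y)) = knockoff_order p ?w"
      unfolding Ford_def g_def using o w0_def by simp
    have "cnt v (knockoff_order p ?w) (mrg (\<lambda>j. snd (g y) ! (j - 1)) H0 s) H0
        = cnt v (knockoff_order p ?w) (mrg (snd y) H0 s) H0"
    proof (rule cnt_cong, intro ballI)
      fix j assume "j \<in> set (knockoff_order p ?w)"
      then have j: "j \<in> {1..p}" by (simp add: ord_set)
      then have "[1..<Suc p] ! (j - 1) = j" using j by (simp add: nth_upt del: upt_Suc)
      moreover have "j - 1 < length [1..<Suc p]" using j by auto
      ultimately have "snd (g y) ! (j - 1) = (if j \<in> N then snd y j else 0)"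
        unfolding g_def by (simp del: upt_Suc)
      then show "mrg (\<lambda>j. snd (g y) ! (j - 1)) H0 s j = mrg (snd y) H0 s j"
        using j unfolding mrg_def N_def S_def by simp
    qed
    then show ?thesis unfolding Phi_def F_def Fo by simp
  qed
  have Bsets: "B s \<in> sets MM" for s
  proof -
    have "(\<lambda>y. k0 \<le> F s (g y)) \<in> measurable MM (count_space UNIV)"
      by (rule measurable_compose[OF gmeas]) simp
    then have "(\<lambda>y. k0 \<le> Phi s y) \<in> measurable MM (count_space UNIV)" by (simp add: PhiF)
    then show ?thesis unfolding B_def by (rule predE)
  qed
  define D where "D = (\<lambda>s. {\<omega> \<in> space M. \<forall>j\<in>H0. chi j \<omega> = s j})"
  define Nul where "Nul = space M - {\<omega> \<in> space M. \<forall>j\<in>H0. chi j \<omega> \<in> {-1, 1}}"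
  have chiset: "{\<omega> \<in> space M. chi j \<omega> \<in> A} \<in> sets M" if "j \<in> H0" for j A
  proof -
    have "chi j -` A \<inter> space M \<in> sets M"
      using measurable_sets[OF chi_meas, of j A] that H0_sub by auto
    then show ?thesis by (simp add: Int_def conj_commute)
  qed
  have Dsets: "D s \<in> sets M" for s
    unfolding D_def
    by (rule sets.sets_Collect_finite_All[OF _ finH0]) (use chiset[of _ "{s _}"] in simp)
  have Nulsets: "Nul \<in> sets M"
    unfolding Nul_def
    by (rule sets.compl_sets, rule sets.sets_Collect_finite_All[OF _ finH0]) (use chiset[of _ "{-1,1}"] in simp)
  have Yspace: "Y \<omega> \<in> space MM" if "\<omega> \<in> space M" for \<omega>
    using measurable_space[OF Ymeas that] .
  have YS: "(\<lambda>j\<in>{1..p}. W j \<omega>, \<lambda>j\<in>{1..p} - H0. chi j \<omega>) = Y \<omega>" for \<omega>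
    unfolding Y_def S_def N_def ..
  have MMdef: "PiM {1..p} (\<lambda>_. borel) \<Otimes>\<^sub>M PiM ({1..p} - H0) (\<lambda>_. count_space UNIV) = MM"
    unfolding MM_def S_def N_def ..
  have cn: "measure M {\<omega> \<in> space M. (\<forall>j\<in>H0. chi j \<omega> = s j) \<and> Y \<omega> \<in> Bs}
         = measure M {\<omega> \<in> space M. Y \<omega> \<in> Bs} / 2 ^ m" if "Bs \<in> sets MM" "s \<in> PS" for Bs s
    using cond_null[of Bs s] that unfolding YS MMdef m_def PS_def by (auto simp: PiE_iff)
  have PD: "measure M (D s) = 1 / 2 ^ m" if "s \<in> PS" for s
  proof -
    have "D s = {\<omega> \<in> space M. (\<forall>j\<in>H0. chi j \<omega> = s j) \<and> Y \<omega> \<in> space MM}"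
      unfolding D_def using Yspace by auto
    moreover have "{\<omega> \<in> space M. Y \<omega> \<in> space MM} = space M" using Yspace by auto
    ultimately show ?thesis using cn[OF sets.top that] P.prob_space by simp
  qed
  have UD: "(\<Union>s\<in>PS. D s) = space M - Nul"
  proof (intro equalityI subsetI)
    fix \<omega> assume "\<omega> \<in> (\<Union>s\<in>PS. D s)"
    then obtain s where "s \<in> PS" "\<omega> \<in> D s" by blast
    then show "\<omega> \<in> space M - Nul" unfolding D_def Nul_def PS_def by (auto simp: PiE_iff)
  next
    fix \<omega> assume w: "\<omega> \<in> space M - Nul"
    then have "restrict (\<lambda>j. chi j \<omega>) H0 \<in> PS" unfolding Nul_def PS_def by auto
    moreover have "\<omega> \<in> D (restrict (\<lambda>j. chi j \<omega>) H0)" using w unfolding D_def Nul_def by auto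
    ultimately show "\<omega> \<in> (\<Union>s\<in>PS. D s)" by blast
  qed
  have disjD: "disjoint_family_on D PS"
    unfolding disjoint_family_on_def
  proof (intro ballI impI)
    fix s t assume st: "s \<in> PS" "t \<in> PS" "s \<noteq> t"
    show "D s \<inter> D t = {}"
    proof (rule ccontr)
      assume "D s \<inter> D t \<noteq> {}"
      then obtain \<omega> where "\<omega> \<in> D s" "\<omega> \<in> D t" by blast
      then have "\<forall>j\<in>H0. s j = t j" unfolding D_def by auto
      then have "s = t" using st(1,2) unfolding PS_def by (auto intro: PiE_ext)
      then show False using st by simp
    qed
  qed
  have "measure M (\<Union>s\<in>PS. D s) = (\<Sum>s\<in>PS. measure M (D s))"
    by (rule P.finite_measure_finite_Union[OF finPS _ disjD]) (use Dsets in auto)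
  also have "\<dots> = 1" using PD cardPS by simp
  finally have "measure M (space M - Nul) = 1" using UD by simp
  then have Nul0: "measure M Nul = 0" using P.finite_measure_compl[OF Nulsets] P.prob_space by simp
  define A where "A = (\<lambda>s. {\<omega> \<in> space M. (\<forall>j\<in>H0. chi j \<omega> = s j) \<and> Y \<omega> \<in> B s})"
  define E where "E = (\<lambda>s. {\<omega> \<in> space M. Y \<omega> \<in> B s})"
  have Esets: "E s \<in> sets M" for s
    unfolding E_def using measurable_sets[OF Ymeas Bsets[of s]] by (simp add: vimage_def Int_def conj_commute)
  have Asets: "A s \<in> sets M" for s
  proof -
    have "A s = D s \<inter> E s" unfolding A_def D_def E_def by auto
    then show ?thesis using Dsets Esets by simp
  qed
  have VPhi: "knockoff_V p v H0 (\<lambda>j. W j \<omega>) (\<lambda>j. chi j \<omega>) = Phi s (Y \<omega>)"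
    if "\<forall>j\<in>H0. chi j \<omega> = s j" for \<omega> s
  proof -
    have o: "knockoff_order p (fst (Y \<omega>)) = knockoff_order p (\<lambda>j. W j \<omega>)"
      by (rule ord_cong) (simp add: Y_def S_def)
    have "cnt v (knockoff_order p (\<lambda>j. W j \<omega>)) (\<lambda>j. chi j \<omega>) H0
        = cnt v (knockoff_order p (\<lambda>j. W j \<omega>)) (mrg (snd (Y \<omega>)) H0 s) H0"
      by (rule cnt_cong) (use that in \<open>auto simp: ord_set mrg_def Y_def N_def S_def\<close>)
    then show ?thesis unfolding Phi_def o knockoff_V_eq[OF \<open>v \<ge> 1\<close>] .
  qed
  have incl: "{\<omega> \<in> space M. real (knockoff_V p v H0 (\<lambda>j. W j \<omega>) (\<lambda>j. chi j \<omega>)) \<ge> x}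
        \<subseteq> (\<Union>s\<in>PS. A s) \<union> Nul"
  proof
    fix \<omega> assume w: "\<omega> \<in> {\<omega> \<in> space M. real (knockoff_V p v H0 (\<lambda>j. W j \<omega>) (\<lambda>j. chi j \<omega>)) \<ge> x}"
    show "\<omega> \<in> (\<Union>s\<in>PS. A s) \<union> Nul"
    proof (cases "\<omega> \<in> Nul")
      case False
      let ?s = "restrict (\<lambda>j. chi j \<omega>) H0"
      have sPS: "?s \<in> PS" using w False unfolding Nul_def PS_def by auto
      have eqs: "\<forall>j\<in>H0. chi j \<omega> = ?s j" by simp
      have "k0 \<le> knockoff_V p v H0 (\<lambda>j. W j \<omega>) (\<lambda>j. chi j \<omega>)" using w kx by simp
      then have "k0 \<le> Phi ?s (Y \<omega>)" using VPhi[OF eqs] by metis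
      then have "\<omega> \<in> A ?s" using w Yspace eqs unfolding A_def B_def by auto
      then show ?thesis using sPS by blast
    qed simp
  qed
  have cntb: "(\<Sum>s\<in>PS. indicator (E s) \<omega>) \<le> 2 ^ m * G v k0" if w: "\<omega> \<in> space M" for \<omega>
  proof -
    let ?L = "knockoff_order p (fst (Y \<omega>))"
    have "(\<Sum>s\<in>PS. indicator (E s) \<omega> :: real) = (\<Sum>s\<in>PS. if k0 \<le> Phi s (Y \<omega>) then 1 else 0)"
      by (rule sum.cong) (use w Yspace in \<open>auto simp: indicator_def E_def B_def\<close>)
    also have "\<dots> = real (card {s \<in> PS. k0 \<le> Phi s (Y \<omega>)})"
      using finPS by (simp add: sum.inter_filter[symmetric])
    also have "\<dots> = real (card {s \<in> PiE H0 (\<lambda>_. {-1,1::int}). k0 \<le> cnt v ?L (mrg (snd (Y \<omega>)) H0 s) H0})"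
      unfolding PS_def Phi_def ..
    also have "\<dots> \<le> 2 ^ card H0 * G v k0"
      by (rule count_bound) (use H0_sub in \<open>auto simp: ord_distinct ord_set\<close>)
    finally show ?thesis unfolding m_def .
  qed
  have sumE: "(\<Sum>s\<in>PS. measure M (E s)) \<le> 2 ^ m * G v k0"
  proof -
    have "(\<Sum>s\<in>PS. measure M (E s)) = (\<Sum>s\<in>PS. \<integral>\<omega>. indicator (E s) \<omega> \<partial>M)"
      by (rule sum.cong) (use Esets sets.sets_into_space in \<open>auto simp: Int_absorb2\<close>)
    also have "\<dots> = (\<integral>\<omega>. (\<Sum>s\<in>PS. indicator (E s) \<omega>) \<partial>M)"
      by (subst Bochner_Integration.integral_sum) (use Esets in \<open>auto intro!: integrable_real_indicator simp: P.emeasure_eq_measure\<close>)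
    also have "\<dots> \<le> (\<integral>\<omega>. 2 ^ m * G v k0 \<partial>M)"
      by (rule integral_mono) (use Esets cntb in \<open>auto intro!: integrable_real_indicator Bochner_Integration.integrable_sum simp: P.emeasure_eq_measure\<close>)
    also have "\<dots> = 2 ^ m * G v k0" using P.prob_space by simp
    finally show ?thesis .
  qed
  have "measure M {\<omega> \<in> space M. real (knockoff_V p v H0 (\<lambda>j. W j \<omega>) (\<lambda>j. chi j \<omega>)) \<ge> x}
       \<le> measure M ((\<Union>s\<in>PS. A s) \<union> Nul)"
    by (rule P.finite_measure_mono[OF incl]) (intro sets.Un sets.finite_UN finPS Asets Nulsets)
  also have "\<dots> \<le> measure M (\<Union>s\<in>PS. A s) + measure M Nul"
    by (rule measure_Un_le) (intro sets.finite_UN finPS Asets, rule Nulsets)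
  also have "\<dots> \<le> (\<Sum>s\<in>PS. measure M (A s))"
    using P.finite_measure_subadditive_finite[OF finPS, of A] Asets Nul0 by auto
  also have "\<dots> = (\<Sum>s\<in>PS. measure M (E s) / 2 ^ m)"
    by (rule sum.cong) (use cn Bsets in \<open>auto simp: A_def E_def\<close>)
  also have "\<dots> = (\<Sum>s\<in>PS. measure M (E s)) / 2 ^ m"
    by (simp add: sum_divide_distrib)
  also have "\<dots> \<le> G v k0"
    using sumE by (simp add: divide_le_eq mult.commute)
  also have "G v k0 = measure_pmf.prob (neg_binomial_pmf v (1/2)) {k. real k \<ge> x}"
    unfolding G_def using kx by simp
  finally show "measure M {\<omega> \<in> space M. real (knockoff_V p v H0 (\<lambda>j. W j \<omega>) (\<lambda>j. chi j \<omega>)) \<ge> x}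
           \<le> measure_pmf.prob (neg_binomial_pmf v (1/2)) {k. real k \<ge> x}" .
qed


end
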